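(* Let $n\ge2$. Every point of the polygon $S(n)$ is an eigenvalue of some standardized Laplacian matrix of order $n$.
   Context: A standardized Laplacian matrix of order $n$ is a real $n\times n$ matrix whose row sums are all $0$ and whose off-diagonal entries are nonpositive with absolute value at most $1/n$. For $k=0,1,\dots,n-1$ put $\lambda_k(n)=\frac1n\big(k-\sum_{j=1}^k e^{-2\pi\mathrm i j/n}\big)=\frac1n\Big(k-\frac{\sin(k\pi/n)}{\sin(\pi/n)}e^{-(k+1)\pi\mathrm i/n}\Big)$ (so $\lambda_0(n)=0$, $\lambda_{n-1}(n)=1$). $S(n)$ is the closed convex polygon with vertices $\lambda_0(n)=0,\lambda_1(n),\dots,\lambda_{n-2}(n),\lambda_{n-1}(n)=1,\overline{\lambda_{n-2}(n)},\dots,\overline{\lambda_1(n)}$. *)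

theory Defs
  imports "HOL-Analysis.Analysis" "Jordan_Normal_Form.Char_Poly"
begin

definition std_laplacian :: "nat \<Rightarrow> real mat \<Rightarrow> bool" where
  "std_laplacian n A \<longleftrightarrow> A \<in> carrier_mat n n
     \<and> (\<forall>i<n. (\<Sum>j<n. A $$ (i, j)) = 0)
     \<and> (\<forall>i<n. \<forall>j<n. i \<noteq> j \<longrightarrow> A $$ (i, j) \<le> 0 \<and> \<bar>A $$ (i, j)\<bar> \<le> 1 / real n)"

definition lam :: "nat \<Rightarrow> nat \<Rightarrow> complex" where
  "lam n k = (of_nat k - (\<Sum>j=1..k. cis (- 2 * pi * real j / real n))) / of_nat n"

definition S :: "nat \<Rightarrow> complex set" where
  "S n = convex hull ((lam n ` {..<n}) \<union> (cnj ` lam n ` {..<n}))"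

end

theory Submission
  imports Defs
begin

lemma reindex_mod:
  fixes g :: "nat \<Rightarrow> 'b::comm_monoid_add"
  assumes "i < n"
  shows "(\<Sum>j<n. g ((j + n - i) mod n)) = (\<Sum>l<n. g l)"
proof (rule sum.reindex_bij_witness[where j = "\<lambda>l. (l + n - i) mod n" and i = "\<lambda>l. (l + i) mod n"])
  fix a assume a: "a \<in> {..<n}"
  show "(a + n - i) mod n \<in> {..<n}" using assms by auto
  show "(a + i) mod n \<in> {..<n}" using assms by auto
  show "g ((a + n - i) mod n) = g ((a + n - i) mod n)" by simp
  have "((a + n - i) mod n + i) mod n = (a + n - i + i) mod n" by (simp add: mod_add_left_eq)
  also have "\<dots> = (a + n) mod n" using assms by simp
  finally show "((a + n - i) mod n + i) mod n = a" using a by simp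
  have "((a + i) mod n + n - i) mod n = ((a + i) mod n + (n - i)) mod n" using assms by simp
  also have "\<dots> = (a + i + (n - i)) mod n" by (simp add: mod_add_left_eq)
  also have "\<dots> = (a + n) mod n" using assms by simp
  finally show "((a + i) mod n + n - i) mod n = a" using a by simp
qed

lemma pow_mod_eq:
  fixes z :: complex
  assumes "z ^ n = 1"
  shows "z ^ (m mod n) = z ^ m"
proof -
  have "z ^ m = z ^ (n * (m div n) + m mod n)" by simp
  also have "\<dots> = (z ^ n) ^ (m div n) * z ^ (m mod n)"
    by (simp only: power_add power_mult)
  finally show ?thesis using assms by simp
qed

definition zeta :: "nat \<Rightarrow> complex" where
  "zeta n = cis (- 2 * pi / real n)"

lemma zeta_pow: "zeta n ^ j = cis (real j * (- 2 * pi / real n))"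
  unfolding zeta_def by (rule Complex.DeMoivre)

lemma zeta_pow_n: "n > 0 \<Longrightarrow> zeta n ^ n = 1"
proof -
  assume "n > 0"
  then have "real n * (- 2 * pi / real n) = - (2 * pi)" by simp
  then show ?thesis unfolding zeta_pow by (simp add: cis_cnj[symmetric])
qed

lemma cis_zeta: "cis (- 2 * pi * real j / real n) = zeta n ^ j"
  unfolding zeta_pow by (simp add: field_simps)

lemma cnj_zeta_pow:
  assumes "n > 0" "j \<le> n"
  shows "cnj (zeta n ^ j) = zeta n ^ (n - j)"
proof -
  have u: "zeta n ^ j * cnj (zeta n ^ j) = 1"
    unfolding zeta_pow cis_cnj cis_mult by simp
  have "zeta n ^ (n - j) = zeta n ^ (n - j) * (zeta n ^ j * cnj (zeta n ^ j))" using u by simp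
  also have "\<dots> = zeta n ^ (n - j + j) * cnj (zeta n ^ j)" by (simp add: power_add)
  also have "\<dots> = cnj (zeta n ^ j)" using assms zeta_pow_n[of n] by simp
  finally show ?thesis by simp
qed

definition Zset :: "nat \<Rightarrow> complex set" where
  "Zset n = {(\<Sum>j<n. of_real (a j) * (1 - zeta n ^ j)) / of_nat n | a. \<forall>j. 0 \<le> a j \<and> a j \<le> 1}"

lemma convex_Zset: "convex (Zset n)"
  unfolding convex_def
proof (intro ballI allI impI)
  fix x y and u v :: real
  assume x: "x \<in> Zset n" and y: "y \<in> Zset n" and uv: "0 \<le> u" "0 \<le> v" "u + v = 1"
  obtain a where a: "\<forall>j. 0 \<le> a j \<and> a j \<le> 1" "x = (\<Sum>j<n. of_real (a j) * (1 - zeta n ^ j)) / of_nat n"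
    using x unfolding Zset_def by auto
  obtain b where b: "\<forall>j. 0 \<le> b j \<and> b j \<le> 1" "y = (\<Sum>j<n. of_real (b j) * (1 - zeta n ^ j)) / of_nat n"
    using y unfolding Zset_def by auto
  define c where "c = (\<lambda>j. u * a j + v * b j)"
  have c: "\<forall>j. 0 \<le> c j \<and> c j \<le> 1"
  proof
    fix j
    have "u * a j \<le> u" using a uv by (simp add: mult_left_le)
    moreover have "v * b j \<le> v" using b uv by (simp add: mult_left_le)
    ultimately show "0 \<le> c j \<and> c j \<le> 1" unfolding c_def using a b uv by simp
  qed
  have "u *\<^sub>R x + v *\<^sub>R y = (\<Sum>j<n. of_real (c j) * (1 - zeta n ^ j)) / of_nat n"
    unfolding a(2) b(2) c_def scaleR_conv_of_real
    by (simp add: sum_distrib_left sum.distrib[symmetric] add_divide_distrib[symmetric] algebra_simps)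
  then show "u *\<^sub>R x + v *\<^sub>R y \<in> Zset n" using c unfolding Zset_def by blast
qed

lemma lam_zeta: "lam n k = (\<Sum>j\<in>{1..k}. (1 - zeta n ^ j)) / of_nat n"
  unfolding lam_def cis_zeta by (simp add: sum_subtractf)

lemma lam_in_Zset:
  assumes "k < n"
  shows "lam n k \<in> Zset n"
proof -
  define a where "a = (\<lambda>j::nat. if j \<in> {1..k} then 1 else (0::real))"
  have "(\<Sum>j<n. of_real (a j) * (1 - zeta n ^ j)) = (\<Sum>j\<in>{..<n} \<inter> {1..k}. (1 - zeta n ^ j))"
    unfolding a_def by (subst sum.inter_restrict) (auto intro: sum.cong)
  also have "{..<n} \<inter> {1..k} = {1..k}" using assms by auto
  finally have "lam n k = (\<Sum>j<n. of_real (a j) * (1 - zeta n ^ j)) / of_nat n"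
    unfolding lam_zeta by simp
  moreover have "\<forall>j. 0 \<le> a j \<and> a j \<le> 1" unfolding a_def by simp
  ultimately show ?thesis unfolding Zset_def by blast
qed

lemma cnj_lam_in_Zset:
  assumes "k < n"
  shows "cnj (lam n k) \<in> Zset n"
proof -
  define a where "a = (\<lambda>j::nat. if j \<in> {n-k..<n} then 1 else (0::real))"
  have "(\<Sum>j<n. of_real (a j) * (1 - zeta n ^ j)) = (\<Sum>j\<in>{..<n} \<inter> {n-k..<n}. (1 - zeta n ^ j))"
    unfolding a_def by (subst sum.inter_restrict) (auto intro: sum.cong)
  also have "{..<n} \<inter> {n-k..<n} = {n-k..<n}" by auto
  also have "(\<Sum>j\<in>{n-k..<n}. (1 - zeta n ^ j)) = (\<Sum>j\<in>{1..k}. (1 - zeta n ^ (n - j)))"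
    by (rule sum.reindex_bij_witness[where i = "\<lambda>j. n - j" and j = "\<lambda>j. n - j"])
       (use assms in auto)
  also have "\<dots> = (\<Sum>j\<in>{1..k}. cnj (1 - zeta n ^ j))"
    by (rule sum.cong) (use assms cnj_zeta_pow[of n] in auto)
  finally have "cnj (lam n k) = (\<Sum>j<n. of_real (a j) * (1 - zeta n ^ j)) / of_nat n"
    unfolding lam_zeta by simp
  moreover have "\<forall>j. 0 \<le> a j \<and> a j \<le> 1" unfolding a_def by simp
  ultimately show ?thesis unfolding Zset_def by blast
qed

lemma S_sub_Zset: "S n \<subseteq> Zset n"
  unfolding S_def
  by (rule hull_minimal) (use lam_in_Zset cnj_lam_in_Zset convex_Zset in auto)


theorem theorem9:
  fixes n :: nat and z :: complex
  assumes "n \<ge> 2" and "z \<in> S n"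
  shows "\<exists>A. std_laplacian n A \<and> eigenvalue (map_mat complex_of_real A) z"
proof -
  have n0: "n > 0" using assms(1) by simp
  obtain a where a: "\<forall>j. 0 \<le> a j \<and> a j \<le> 1"
    and z: "z = (\<Sum>j<n. of_real (a j) * (1 - zeta n ^ j)) / of_nat n"
    using assms(2) S_sub_Zset unfolding Zset_def by blast
  define s where "s = (\<Sum>l<n. a l) / real n"
  define A where "A = mat n n (\<lambda>(i,j). (if i = j then s else 0) - a ((j + n - i) mod n) / real n)"
  have Aij: "A $$ (i,j) = (if i = j then s else 0) - a ((j + n - i) mod n) / real n"
    if "i < n" "j < n" for i j
    unfolding A_def using that by simp
  have Acar: "A \<in> carrier_mat n n" unfolding A_def by simp
  have lap: "std_laplacian n A"
    unfolding std_laplacian_def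
  proof (intro conjI allI impI Acar)
    fix i assume i: "i < n"
    have "(\<Sum>j<n. A $$ (i, j)) = (\<Sum>j<n. (if i = j then s else 0)) - (\<Sum>j<n. a ((j + n - i) mod n) / real n)"
      using Aij i by (simp add: sum_subtractf)
    also have "(\<Sum>j<n. (if i = j then s else 0)) = s" using i by simp
    also have "(\<Sum>j<n. a ((j + n - i) mod n) / real n) = (\<Sum>l<n. a l / real n)"
      by (rule reindex_mod[OF i])
    finally show "(\<Sum>j<n. A $$ (i, j)) = 0" unfolding s_def by (simp add: sum_divide_distrib)
  next
    fix i j assume i: "i < n" and j: "j < n" and ij: "i \<noteq> j"
    have "A $$ (i,j) = - (a ((j + n - i) mod n) / real n)" using Aij[OF i j] ij by simp
    then show "A $$ (i, j) \<le> 0" "\<bar>A $$ (i, j)\<bar> \<le> 1 / real n"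
      using a[rule_format, of "(j + n - i) mod n"] n0 by (auto simp: divide_right_mono)
  qed
  define M where "M = map_mat complex_of_real A"
  define v where "v = vec n (\<lambda>j. zeta n ^ j)"
  have Mcar: "M \<in> carrier_mat n n" unfolding M_def using Acar by simp
  have Mij: "M $$ (i,j) = of_real ((if i = j then s else 0) - a ((j + n - i) mod n) / real n)"
    if "i < n" "j < n" for i j
    unfolding M_def using that Acar Aij[OF that] by simp
  have shift: "zeta n ^ ((j + n - i) mod n) * zeta n ^ i = zeta n ^ j" if "i < n" for i j
  proof -
    have "zeta n ^ ((j + n - i) mod n) * zeta n ^ i = zeta n ^ (j + n - i) * zeta n ^ i"
      using pow_mod_eq[OF zeta_pow_n[OF n0]] by simp
    also have "\<dots> = zeta n ^ (j + n)" using that by (simp add: power_add[symmetric])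
    also have "\<dots> = zeta n ^ j" using zeta_pow_n[OF n0] by (simp add: power_add)
    finally show ?thesis .
  qed
  have Mv: "(M *\<^sub>v v) $ i = z * v $ i" if i: "i < n" for i
  proof -
    have "(M *\<^sub>v v) $ i = (\<Sum>j<n. M $$ (i,j) * zeta n ^ j)"
      using i Mcar unfolding v_def by (simp add: scalar_prod_def atLeast0LessThan)
    also have "\<dots> = (\<Sum>j<n. (if i = j then of_real s * zeta n ^ j else 0)
        - of_real (a ((j + n - i) mod n)) / of_nat n * (zeta n ^ ((j + n - i) mod n) * zeta n ^ i))"
      by (rule sum.cong) (use i Mij in \<open>auto simp: shift left_diff_distrib\<close>)
    also have "\<dots> = of_real s * zeta n ^ i - (\<Sum>j<n. of_real (a ((j + n - i) mod n)) / of_nat n * zeta n ^ ((j + n - i) mod n)) * zeta n ^ i"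
      using i by (simp add: sum_subtractf sum_distrib_right mult.assoc)
    also have "(\<Sum>j<n. of_real (a ((j + n - i) mod n)) / of_nat n * zeta n ^ ((j + n - i) mod n))
        = (\<Sum>l<n. of_real (a l) / of_nat n * zeta n ^ l)"
      by (rule reindex_mod[OF i])
    also have "of_real s * zeta n ^ i - (\<Sum>l<n. of_real (a l) / of_nat n * zeta n ^ l) * zeta n ^ i = z * zeta n ^ i"
      unfolding z s_def
      by (simp add: algebra_simps sum_subtractf sum_divide_distrib[symmetric] diff_divide_distrib sum_distrib_left)
    finally show ?thesis using i unfolding v_def by simp
  qed
  have "eigenvector M v z"
    unfolding eigenvector_def
  proof (intro conjI)
    show "v \<in> carrier_vec (dim_row M)" using Mcar unfolding v_def by simp
    have "v $ 0 \<noteq> 0\<^sub>v n $ 0" using n0 unfolding v_def by simp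
    then show "v \<noteq> 0\<^sub>v (dim_row M)" using Mcar by auto
    show "M *\<^sub>v v = z \<cdot>\<^sub>v v"
      by (rule eq_vecI) (use Mv Mcar in \<open>auto simp: v_def\<close>)
  qed
  then show ?thesis using lap unfolding M_def eigenvalue_def by blast
qed

end
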